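(* In the network model of the context, suppose $P<\infty$ and $N_0>0$. The capacity of cooperation-free admissible protocols, i.e. protocols in which nodes $1,\dots,K$ never transmit and only the source transmits, is $0$. This holds for both unicasting and multicasting.
   Context: Network model. For each $K\ge1$ there is a source node $0$ and receiving nodes $1,\dots,K$. The channel gains $h_{jk}$ between distinct nodes are i.i.d. $\mathcal{CN}(0,1)$ and fixed during the $n$ channel uses. A receiving node $k$ observes $y_k(i)=\sum_{j\in\mathcal{T}(i)}h_{jk}x_j(i)+z_k(i)$, where $\mathcal{T}(i)$ is the set of transmitting nodes at time $i$ and the noises $z_k(i)$ are i.i.d. $\mathcal{CN}(0,N_0)$, independent of everything else. Admissible protocol. Nodes are half-duplex and relays, once they start transmitting, never return to receive mode. The source's symbols are functions of the message $W\in\{1,\dots,M\}$. A relay's transmitted symbols and each node's final decision $\hat W_k$ are functions of that node's observations and of its incoming gains $\{h_{jk}\}_j$. The expected sum power satisfies $E[\frac1n\sum_i\sum_{k\in\mathcal{T}(i)}|X_k(i)|^2]\le P$. Unicasting and multicasting. Unicasting has a single destination node; multicasting requires all nodes $1,\dots,K$ to decode. Capacity. A rate $R$ is achievable if for every $K$ there is an admissible protocol (here, a cooperation-free one) with $n_K$ channel uses and $2^{n_KR}$ messages whose probability of decoding failure at the destination(s) tends to $0$ as $K\to\infty$. The capacity is the supremum of the achievable rates. *)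

theory Defs
  imports "HOL-Probability.Probability"
begin

text \<open>Circularly-symmetric complex Gaussian law CN(0, s2) on the complex plane
  (density w.r.t. Lebesgue measure on C = R^2).\<close>
definition cgauss :: "real \<Rightarrow> complex measure" where
  "cgauss s2 = density lborel (\<lambda>z. ennreal (exp (- (cmod z)\<^sup>2 / s2) / (pi * s2)))"

text \<open>Channel gains h_jk from node j to receiving node k (j in 0..K, k in 1..K, j ~= k).\<close>
definition gain_idx :: "nat \<Rightarrow> (nat \<times> nat) set" where
  "gain_idx K = {(j, k). j \<le> K \<and> 1 \<le> k \<and> k \<le> K \<and> j \<noteq> k}"

text \<open>Noise samples z_k(i) at receiving node k and time i < n.\<close>
definition noise_idx :: "nat \<Rightarrow> nat \<Rightarrow> (nat \<times> nat) set" where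
  "noise_idx K n = {1..K} \<times> {..<n}"

definition chan_space :: "real \<Rightarrow> nat \<Rightarrow> nat \<Rightarrow>
    ((nat \<times> nat \<Rightarrow> complex) \<times> (nat \<times> nat \<Rightarrow> complex)) measure" where
  "chan_space N0 K n =
     (PiM (gain_idx K) (\<lambda>_. cgauss 1)) \<Otimes>\<^sub>M (PiM (noise_idx K n) (\<lambda>_. cgauss N0))"

definition num_msgs :: "nat \<Rightarrow> real \<Rightarrow> nat" where
  "num_msgs n R = nat \<lceil>2 powr (real n * R)\<rceil>"

text \<open>Observations of node k in a cooperation-free protocol (only the source 0 transmits,
  with symbol x w i at time i when the message is w): y_k(i) = h_0k x_0(i) + z_k(i), i < n.\<close>
definition observation ::
    "(nat \<Rightarrow> nat \<Rightarrow> complex) \<Rightarrow> nat \<Rightarrow> nat \<Rightarrow> nat \<Rightarrow>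
     (nat \<times> nat \<Rightarrow> complex) \<times> (nat \<times> nat \<Rightarrow> complex) \<Rightarrow> nat \<Rightarrow> complex" where
  "observation x w k n \<omega> = restrict (\<lambda>i. fst \<omega> (0, k) * x w i + snd \<omega> (k, i)) {..<n}"

definition incoming ::
    "nat \<Rightarrow> nat \<Rightarrow> (nat \<times> nat \<Rightarrow> complex) \<times> (nat \<times> nat \<Rightarrow> complex) \<Rightarrow> nat \<Rightarrow> complex" where
  "incoming K k \<omega> = restrict (\<lambda>j. fst \<omega> (j, k)) ({0..K} - {k})"

text \<open>Probability (message W uniform on {1..M}) that some destination in D decodes wrongly.
  dec k is the decision function of node k, applied to its observations and incoming gains.\<close>
definition fail_prob ::
    "real \<Rightarrow> nat \<Rightarrow> nat \<Rightarrow> nat \<Rightarrow> (nat \<Rightarrow> nat \<Rightarrow> complex) \<Rightarrow>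
     (nat \<Rightarrow> (nat \<Rightarrow> complex) \<times> (nat \<Rightarrow> complex) \<Rightarrow> nat) \<Rightarrow> nat set \<Rightarrow> real" where
  "fail_prob N0 K n M x dec D =
     (\<Sum>w\<in>{1..M}. measure (chan_space N0 K n)
        {\<omega> \<in> space (chan_space N0 K n).
           \<exists>k\<in>D. dec k (observation x w k n \<omega>, incoming K k \<omega>) \<noteq> w}) / real M"

definition cf_admissible ::
    "real \<Rightarrow> nat set \<Rightarrow> nat \<Rightarrow> nat \<Rightarrow> nat \<Rightarrow> (nat \<Rightarrow> nat \<Rightarrow> complex) \<Rightarrow>
     (nat \<Rightarrow> (nat \<Rightarrow> complex) \<times> (nat \<Rightarrow> complex) \<Rightarrow> nat) \<Rightarrow> bool" where
  "cf_admissible P D K n M x dec \<longleftrightarrow>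
     1 \<le> n \<and>
     (\<Sum>w\<in>{1..M}. (1 / real n) * (\<Sum>i<n. (cmod (x w i))\<^sup>2)) / real M \<le> P \<and>
     (\<forall>k\<in>D. dec k \<in> measurable
        (PiM {..<n} (\<lambda>_. borel) \<Otimes>\<^sub>M PiM ({0..K} - {k}) (\<lambda>_. borel)) (count_space UNIV))"

definition cf_achievable :: "real \<Rightarrow> real \<Rightarrow> (nat \<Rightarrow> nat set) \<Rightarrow> real \<Rightarrow> bool" where
  "cf_achievable P N0 D R \<longleftrightarrow> 0 \<le> R \<and>
     (\<exists>(n :: nat \<Rightarrow> nat) (x :: nat \<Rightarrow> nat \<Rightarrow> nat \<Rightarrow> complex)
        (dec :: nat \<Rightarrow> nat \<Rightarrow> (nat \<Rightarrow> complex) \<times> (nat \<Rightarrow> complex) \<Rightarrow> nat).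
        (\<forall>K\<ge>1. cf_admissible P (D K) K (n K) (num_msgs (n K) R) (x K) (dec K)) \<and>
        (\<lambda>K. fail_prob N0 K (n K) (num_msgs (n K) R) (x K) (dec K) (D K)) \<longlonglongrightarrow> 0)"

definition cf_capacity :: "real \<Rightarrow> real \<Rightarrow> (nat \<Rightarrow> nat set) \<Rightarrow> ereal" where
  "cf_capacity P N0 D = Sup (ereal ` {R. cf_achievable P N0 D R})"

end

theory Submission
  imports Defs
begin


definition phi :: "real \<Rightarrow> complex \<Rightarrow> real" where
  "phi s z = exp (- (cmod z)\<^sup>2 / s) / (pi * s)"

lemma cgauss_phi: "cgauss s = density lborel (\<lambda>z. ennreal (phi s z))"
  unfolding cgauss_def phi_def by simp

lemma phi_measurable[measurable]: "phi s \<in> borel_measurable borel"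
  unfolding phi_def by measurable

lemma phi_nonneg: "0 < s \<Longrightarrow> 0 \<le> phi s z"
  unfolding phi_def by simp

lemma phi_prod:
  assumes s: "0 < s"
  shows "phi s z = (\<Prod>b\<in>Basis. normal_density 0 (sqrt (s/2)) (z \<bullet> b))"
proof -
  have "(\<Prod>b\<in>Basis. normal_density 0 (sqrt (s/2)) (z \<bullet> b))
      = normal_density 0 (sqrt (s/2)) (Re z) * normal_density 0 (sqrt (s/2)) (Im z)"
    by (simp add: Basis_complex_def)
  also have "\<dots> = (1 / sqrt (pi * s)) * exp (- (Re z)\<^sup>2 / s) * ((1 / sqrt (pi * s)) * exp (- (Im z)\<^sup>2 / s))"
    using s by (simp add: normal_density_def power2_eq_square real_sqrt_mult)
  also have "\<dots> = (1 / sqrt (pi * s))\<^sup>2 * (exp (- (Re z)\<^sup>2 / s) * exp (- (Im z)\<^sup>2 / s))"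
    by (simp add: power2_eq_square)
  also have "\<dots> = (1 / (pi * s)) * exp (- (Re z)\<^sup>2 / s + - (Im z)\<^sup>2 / s)"
    using s by (simp add: power_divide exp_add[symmetric])
  also have "- (Re z)\<^sup>2 / s + - (Im z)\<^sup>2 / s = - (cmod z)\<^sup>2 / s"
    by (simp add: cmod_power2 diff_divide_distrib)
  also have "(1 / (pi * s)) * exp (- (cmod z)\<^sup>2 / s) = exp (- (cmod z)\<^sup>2 / s) / (pi * s)"
    by simp
  finally show ?thesis unfolding phi_def by simp
qed

lemma nn_integral_phi:
  assumes s: "0 < s"
  shows "(\<integral>\<^sup>+z. ennreal (phi s z) \<partial>lborel) = 1"
proof -
  have 1: "(\<integral>\<^sup>+x. ennreal (normal_density 0 (sqrt (s/2)) x) \<partial>lborel) = 1"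
    using prob_space.emeasure_space_1[OF prob_space_normal_density[where \<mu>=0 and \<sigma>="sqrt (s/2)"]] s
    by (simp add: emeasure_density)
  have "(\<integral>\<^sup>+z. ennreal (phi s z) \<partial>lborel) = (\<integral>\<^sup>+z. (\<Prod>b\<in>Basis. ennreal (normal_density 0 (sqrt (s/2)) ((z::complex) \<bullet> b))) \<partial>lborel)"
    by (intro nn_integral_cong) (simp add: phi_prod[OF s] prod_ennreal)
  also have "\<dots> = (\<Prod>b\<in>(Basis::complex set). (\<integral>\<^sup>+x. normal_density 0 (sqrt (s/2)) x \<partial>lborel))"
    using nn_integral_lborel_prod[where f="\<lambda>b. normal_density 0 (sqrt (s/2))" and 'a=complex] by simp
  also have "\<dots> = 1" using 1 by simp
  finally show ?thesis .
qed

lemma prob_space_cgauss: "0 < s \<Longrightarrow> prob_space (cgauss s)"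
  unfolding cgauss_phi
  by (rule prob_spaceI) (simp add: emeasure_density nn_integral_phi)

lemma sets_cgauss[measurable_cong, simp]: "sets (cgauss s) = sets borel"
  unfolding cgauss_def by simp

lemma space_cgauss[simp]: "space (cgauss s) = UNIV"
  unfolding cgauss_def by simp

lemma nn_integral_lborel_translate:
  fixes f :: "complex \<Rightarrow> ennreal"
  assumes [measurable]: "f \<in> borel_measurable borel"
  shows "(\<integral>\<^sup>+y. f (c + y) \<partial>lborel) = (\<integral>\<^sup>+y. f y \<partial>lborel)"
proof -
  have "(\<integral>\<^sup>+y. f y \<partial>lborel) = (\<integral>\<^sup>+y. f y \<partial>distr lborel borel ((+) c))"
    by (simp add: lborel_distr_plus)
  also have "\<dots> = (\<integral>\<^sup>+y. f (c + y) \<partial>lborel)"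
    by (subst nn_integral_distr) auto
  finally show ?thesis by simp
qed


definition rr :: "real \<Rightarrow> complex \<Rightarrow> complex \<Rightarrow> real" where
  "rr s c y = exp ((2 * Re (y * cnj c) - (cmod c)\<^sup>2) / s)"

lemma rr_measurable[measurable]: "rr s c \<in> borel_measurable borel"
  unfolding rr_def by measurable

lemma cmod_diff_sq: "(cmod (y - c))\<^sup>2 = (cmod y)\<^sup>2 - 2 * Re (y * cnj c) + (cmod c)\<^sup>2"
  unfolding cmod_power2 by (simp add: power2_eq_square algebra_simps)

lemma phi_shift:
  assumes s: "0 < s"
  shows "phi s (y - c) = phi s y * rr s c y"
proof -
  have "- (cmod (y - c))\<^sup>2 / s = - (cmod y)\<^sup>2 / s + (2 * Re (y * cnj c) - (cmod c)\<^sup>2) / s"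
    by (simp add: cmod_diff_sq diff_divide_distrib add_divide_distrib)
  then have "exp (- (cmod (y - c))\<^sup>2 / s) = exp (- (cmod y)\<^sup>2 / s) * exp ((2 * Re (y * cnj c) - (cmod c)\<^sup>2) / s)"
    by (simp only: exp_add)
  then show ?thesis unfolding phi_def rr_def by simp
qed

lemma phi_shift2:
  assumes s: "0 < s"
  shows "phi s y * (rr s c y)\<^sup>2 = exp (2 * (cmod c)\<^sup>2 / s) * phi s (y - 2 * c)"
proof -
  have e: "(cmod (y - 2 * c))\<^sup>2 = (cmod y)\<^sup>2 - 4 * Re (y * cnj c) + 4 * (cmod c)\<^sup>2"
    unfolding cmod_power2 by (simp add: power2_eq_square algebra_simps)
  have "- (cmod y)\<^sup>2 / s + 2 * ((2 * Re (y * cnj c) - (cmod c)\<^sup>2) / s)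
        = 2 * (cmod c)\<^sup>2 / s + - (cmod (y - 2 * c))\<^sup>2 / s"
    unfolding e using s by (simp add: field_simps)
  then have "exp (- (cmod y)\<^sup>2 / s) * (exp ((2 * Re (y * cnj c) - (cmod c)\<^sup>2) / s))\<^sup>2
        = exp (2 * (cmod c)\<^sup>2 / s) * exp (- (cmod (y - 2 * c))\<^sup>2 / s)"
    by (simp add: exp_add[symmetric] power2_eq_square exp_add[symmetric])
  then show ?thesis unfolding phi_def rr_def by (simp add: field_simps)
qed

lemma emeasure_cgauss_shift:
  assumes s: "0 < s" and A[measurable]: "A \<in> sets borel"
  shows "emeasure (cgauss s) {y. c + y \<in> A} = (\<integral>\<^sup>+y. indicator A y * ennreal (rr s c y) \<partial>cgauss s)"
proof -
  have meas: "{y. c + y \<in> A} \<in> sets borel" by measurable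
  have "emeasure (cgauss s) {y. c + y \<in> A} = (\<integral>\<^sup>+y. ennreal (phi s y) * indicator {y. c + y \<in> A} y \<partial>lborel)"
    unfolding cgauss_phi using meas by (simp add: emeasure_density)
  also have "\<dots> = (\<integral>\<^sup>+y. (\<lambda>u. ennreal (phi s (u - c)) * indicator A u) (c + y) \<partial>lborel)"
    by (intro nn_integral_cong) (simp add: indicator_def)
  also have "\<dots> = (\<integral>\<^sup>+u. ennreal (phi s (u - c)) * indicator A u \<partial>lborel)"
    by (rule nn_integral_lborel_translate) measurable
  also have "\<dots> = (\<integral>\<^sup>+u. ennreal (phi s u) * (indicator A u * ennreal (rr s c u)) \<partial>lborel)"
    by (intro nn_integral_cong) (simp add: phi_shift[OF s] ennreal_mult' phi_nonneg[OF s] mult_ac)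
  also have "\<dots> = (\<integral>\<^sup>+y. indicator A y * ennreal (rr s c y) \<partial>cgauss s)"
    unfolding cgauss_phi by (subst nn_integral_density) auto
  finally show ?thesis .
qed

lemma nn_integral_rr_sq:
  assumes s: "0 < s"
  shows "(\<integral>\<^sup>+y. (ennreal (rr s c y))\<^sup>2 \<partial>cgauss s) = ennreal (exp (2 * (cmod c)\<^sup>2 / s))"
proof -
  have "(\<integral>\<^sup>+y. (ennreal (rr s c y))\<^sup>2 \<partial>cgauss s) = (\<integral>\<^sup>+y. ennreal (phi s y) * (ennreal (rr s c y))\<^sup>2 \<partial>lborel)"
    unfolding cgauss_phi by (subst nn_integral_density) auto
  also have "\<dots> = (\<integral>\<^sup>+y. ennreal (exp (2 * (cmod c)\<^sup>2 / s)) * (\<lambda>u. ennreal (phi s u)) (- (2 * c) + y) \<partial>lborel)"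
  proof (intro nn_integral_cong)
    fix x
    have "ennreal (phi s x) * (ennreal (rr s c x))\<^sup>2 = ennreal (phi s x * (rr s c x)\<^sup>2)"
      by (simp add: ennreal_mult'' ennreal_power phi_nonneg[OF s] rr_def)
    also have "\<dots> = ennreal (exp (2 * (cmod c)\<^sup>2 / s)) * ennreal (phi s (x - 2 * c))"
      by (simp add: phi_shift2[OF s] ennreal_mult phi_nonneg[OF s])
    finally show "ennreal (phi s x) * (ennreal (rr s c x))\<^sup>2 = ennreal (exp (2 * (cmod c)\<^sup>2 / s)) * (\<lambda>u. ennreal (phi s u)) (- (2 * c) + x)"
      by simp
  qed
  also have "\<dots> = ennreal (exp (2 * (cmod c)\<^sup>2 / s)) * (\<integral>\<^sup>+y. (\<lambda>u. ennreal (phi s u)) (- (2 * c) + y) \<partial>lborel)"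
    by (rule nn_integral_cmult) measurable
  also have "(\<integral>\<^sup>+y. (\<lambda>u. ennreal (phi s u)) (- (2 * c) + y) \<partial>lborel) = 1"
    by (subst nn_integral_lborel_translate) (auto simp: nn_integral_phi[OF s])
  finally show ?thesis by simp
qed



lemma prob_space_rr_density:
  assumes s: "0 < s"
  shows "prob_space (density (cgauss s) (\<lambda>y. ennreal (rr s c y)))"
proof (rule prob_spaceI)
  interpret prob_space "cgauss s" by (rule prob_space_cgauss[OF s])
  have "emeasure (density (cgauss s) (\<lambda>y. ennreal (rr s c y))) UNIV = (\<integral>\<^sup>+y. indicator UNIV y * ennreal (rr s c y) \<partial>cgauss s)"
    by (subst emeasure_density) (auto simp: mult.commute)
  also have "\<dots> = emeasure (cgauss s) {y. c + y \<in> UNIV}"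
    by (rule emeasure_cgauss_shift[OF s, symmetric]) simp
  also have "\<dots> = 1" using emeasure_space_1 by simp
  finally show "emeasure (density (cgauss s) (\<lambda>y. ennreal (rr s c y))) (space (density (cgauss s) (\<lambda>y. ennreal (rr s c y)))) = 1"
    by simp
qed

lemma shift_distr_eq:
  fixes I :: "'i set" and a :: "'i \<Rightarrow> complex"
  assumes s: "0 < s" and I: "finite I"
  shows "distr (PiM I (\<lambda>_. cgauss s)) (PiM I (\<lambda>_. cgauss s)) (\<lambda>y. \<lambda>i\<in>I. a i + y i)
       = density (PiM I (\<lambda>_. cgauss s)) (\<lambda>y. \<Prod>i\<in>I. ennreal (rr s (a i) (y i)))"
proof -
  let ?N = "PiM I (\<lambda>_. cgauss s)"
  let ?Q = "\<lambda>i. density (cgauss s) (\<lambda>y. ennreal (rr s (a i) y))"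
  interpret Q: product_prob_space ?Q
    by (intro product_prob_spaceI prob_space_rr_density s)
  interpret N: product_prob_space "\<lambda>_. cgauss s"
    by (intro product_prob_spaceI prob_space_cgauss s)
  have sN: "sets ?N = sets (PiM I ?Q)"
    by (intro sets_PiM_cong) auto
  have Tm[measurable]: "(\<lambda>y. \<lambda>i\<in>I. a i + y i) \<in> measurable ?N ?N"
    by measurable
  have Fm[measurable]: "(\<lambda>y. \<Prod>i\<in>I. ennreal (rr s (a i) (y i))) \<in> borel_measurable ?N"
    by measurable
  have Qi: "emeasure (?Q i) A = emeasure (cgauss s) {y. a i + y \<in> A}" if "A \<in> sets borel" for i A
    using that by (simp add: emeasure_density emeasure_cgauss_shift[OF s] mult.commute)
  have 1: "distr ?N ?N (\<lambda>y. \<lambda>i\<in>I. a i + y i) = PiM I ?Q"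
  proof (rule Q.PiM_eqI[OF I])
    show "sets (distr ?N ?N (\<lambda>y. \<lambda>i\<in>I. a i + y i)) = sets (PiM I ?Q)"
      using sN by simp
  next
    fix A assume A: "\<And>i. i \<in> I \<Longrightarrow> A i \<in> sets (?Q i)"
    then have A': "\<And>i. i \<in> I \<Longrightarrow> A i \<in> sets borel" by simp
    have pre: "(\<lambda>y. \<lambda>i\<in>I. a i + y i) -` PiE I A \<inter> space ?N = PiE I (\<lambda>i. {y. a i + y \<in> A i})"
      by (auto simp: space_PiM PiE_iff)
    have "emeasure (distr ?N ?N (\<lambda>y. \<lambda>i\<in>I. a i + y i)) (PiE I A) = emeasure ?N (PiE I (\<lambda>i. {y. a i + y \<in> A i}))"
      using A' by (subst emeasure_distr) (auto simp: pre intro!: sets_PiM_I_finite I)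
    also have "\<dots> = (\<Prod>i\<in>I. emeasure (cgauss s) {y. a i + y \<in> A i})"
      using A' by (subst N.emeasure_PiM) (auto simp: I)
    also have "\<dots> = (\<Prod>i\<in>I. emeasure (?Q i) (A i))"
      using A' by (intro prod.cong refl Qi[symmetric]) auto
    finally show "emeasure (distr ?N ?N (\<lambda>y. \<lambda>i\<in>I. a i + y i)) (PiE I A) = (\<Prod>i\<in>I. emeasure (?Q i) (A i))" .
  qed
  have 2: "density ?N (\<lambda>y. \<Prod>i\<in>I. ennreal (rr s (a i) (y i))) = PiM I ?Q"
  proof (rule Q.PiM_eqI[OF I])
    show "sets (density ?N (\<lambda>y. \<Prod>i\<in>I. ennreal (rr s (a i) (y i)))) = sets (PiM I ?Q)"
      using sN by simp
  next
    fix A assume A: "\<And>i. i \<in> I \<Longrightarrow> A i \<in> sets (?Q i)"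
    then have A'[measurable]: "\<And>i. i \<in> I \<Longrightarrow> A i \<in> sets borel" by simp
    have PA: "PiE I A \<in> sets ?N"
      using A' by (auto intro!: sets_PiM_I_finite I)
    have "emeasure (density ?N (\<lambda>y. \<Prod>i\<in>I. ennreal (rr s (a i) (y i)))) (PiE I A)
        = (\<integral>\<^sup>+y. (\<Prod>i\<in>I. ennreal (rr s (a i) (y i))) * indicator (PiE I A) y \<partial>?N)"
      using PA by (simp add: emeasure_density)
    also have "\<dots> = (\<integral>\<^sup>+y. (\<Prod>i\<in>I. ennreal (rr s (a i) (y i)) * indicator (A i) (y i)) \<partial>?N)"
    proof (intro nn_integral_cong)
      fix y assume "y \<in> space ?N"
      then have y: "y \<in> PiE I (\<lambda>_. UNIV)" by (simp add: space_PiM)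
      have "indicator (PiE I A) y = (\<Prod>i\<in>I. indicator (A i) (y i) :: ennreal)"
        using y by (auto simp: indicator_def PiE_iff prod_ennreal I)
      then show "(\<Prod>i\<in>I. ennreal (rr s (a i) (y i))) * indicator (PiE I A) y
          = (\<Prod>i\<in>I. ennreal (rr s (a i) (y i)) * indicator (A i) (y i))"
        by (simp add: prod.distrib)
    qed
    also have "\<dots> = (\<Prod>i\<in>I. (\<integral>\<^sup>+y. ennreal (rr s (a i) y) * indicator (A i) y \<partial>cgauss s))"
      by (rule N.product_nn_integral_prod[OF I]) measurable
    also have "\<dots> = (\<Prod>i\<in>I. emeasure (?Q i) (A i))"
      using A' by (intro prod.cong refl) (simp add: emeasure_density)
    finally show "emeasure (density ?N (\<lambda>y. \<Prod>i\<in>I. ennreal (rr s (a i) (y i)))) (PiE I A) = (\<Prod>i\<in>I. emeasure (?Q i) (A i))" .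
  qed
  show ?thesis using 1 2 by simp
qed


lemma shift_bound:
  fixes I :: "'i set" and a :: "'i \<Rightarrow> complex"
  assumes s: "0 < s" and I: "finite I" and D: "D \<in> sets (PiM I (\<lambda>_. cgauss s))"
  shows "(measure (PiM I (\<lambda>_. cgauss s)) {y \<in> space (PiM I (\<lambda>_. cgauss s)). (\<lambda>i\<in>I. a i + y i) \<in> D})\<^sup>2
     \<le> measure (PiM I (\<lambda>_. cgauss s)) D * exp (2 * (\<Sum>i\<in>I. (cmod (a i))\<^sup>2) / s)"
proof -
  let ?N = "PiM I (\<lambda>_. cgauss s)"
  let ?F = "\<lambda>y. \<Prod>i\<in>I. ennreal (rr s (a i) (y i))"
  interpret N: product_prob_space "\<lambda>_. cgauss s"
    by (intro product_prob_spaceI prob_space_cgauss s)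
  have NPr: "prob_space ?N" by (rule prob_space_PiM) (simp add: prob_space_cgauss[OF s])
  then have fm: "finite_measure ?N" by (rule prob_space.finite_measure)
  have Tm[measurable]: "(\<lambda>y. \<lambda>i\<in>I. a i + y i) \<in> measurable ?N ?N"
    by measurable
  have Fm[measurable]: "?F \<in> borel_measurable ?N"
    by measurable
  note D[measurable]
  have pre: "{y \<in> space ?N. (\<lambda>i\<in>I. a i + y i) \<in> D} = (\<lambda>y. \<lambda>i\<in>I. a i + y i) -` D \<inter> space ?N" by auto
  have "emeasure ?N {y \<in> space ?N. (\<lambda>i\<in>I. a i + y i) \<in> D} = emeasure (distr ?N ?N (\<lambda>y. \<lambda>i\<in>I. a i + y i)) D"
    unfolding pre by (subst emeasure_distr) auto
  also have "\<dots> = emeasure (density ?N ?F) D"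
    by (simp add: shift_distr_eq[OF s I])
  also have "\<dots> = (\<integral>\<^sup>+y. indicator D y * ?F y \<partial>?N)"
    by (simp add: emeasure_density mult.commute)
  finally have e1: "emeasure ?N {y \<in> space ?N. (\<lambda>i\<in>I. a i + y i) \<in> D} = (\<integral>\<^sup>+y. indicator D y * ?F y \<partial>?N)" .
  have "(\<integral>\<^sup>+y. indicator D y * ?F y \<partial>?N)\<^sup>2 \<le> (\<integral>\<^sup>+y. (indicator D y)\<^sup>2 \<partial>?N) * (\<integral>\<^sup>+y. (?F y)\<^sup>2 \<partial>?N)"
    by (rule Cauchy_Schwarz_nn_integral) measurable
  also have "(\<integral>\<^sup>+y. (indicator D y :: ennreal)\<^sup>2 \<partial>?N) = emeasure ?N D"
  proof -
    have "(\<lambda>y. (indicator D y :: ennreal)\<^sup>2) = indicator D"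
      by (auto simp: indicator_def fun_eq_iff)
    then show ?thesis using D by simp
  qed
  also have "(\<integral>\<^sup>+y. (?F y)\<^sup>2 \<partial>?N) = (\<integral>\<^sup>+y. (\<Prod>i\<in>I. (ennreal (rr s (a i) (y i)))\<^sup>2) \<partial>?N)"
    by (simp add: prod_power_distrib)
  also have "\<dots> = (\<Prod>i\<in>I. (\<integral>\<^sup>+y. (ennreal (rr s (a i) y))\<^sup>2 \<partial>cgauss s))"
    by (rule N.product_nn_integral_prod[OF I]) measurable
  also have "\<dots> = (\<Prod>i\<in>I. ennreal (exp (2 * (cmod (a i))\<^sup>2 / s)))"
    by (simp add: nn_integral_rr_sq[OF s])
  also have "\<dots> = ennreal (exp (2 * (\<Sum>i\<in>I. (cmod (a i))\<^sup>2) / s))"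
    by (simp add: prod_ennreal exp_sum[symmetric] sum_divide_distrib sum_distrib_left I)
  finally have "(emeasure ?N {y \<in> space ?N. (\<lambda>i\<in>I. a i + y i) \<in> D})\<^sup>2
       \<le> emeasure ?N D * ennreal (exp (2 * (\<Sum>i\<in>I. (cmod (a i))\<^sup>2) / s))"
    unfolding e1 .
  then have "ennreal ((measure ?N {y \<in> space ?N. (\<lambda>i\<in>I. a i + y i) \<in> D})\<^sup>2)
       \<le> ennreal (measure ?N D * exp (2 * (\<Sum>i\<in>I. (cmod (a i))\<^sup>2) / s))"
    by (simp add: finite_measure.emeasure_eq_measure[OF fm] ennreal_power ennreal_mult'')
  then show ?thesis by (subst (asm) ennreal_le_iff) auto
qed



lemma sum_sqrt_bound:
  fixes p q :: "nat \<Rightarrow> real"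
  assumes G: "finite G" and pq: "\<And>w. w \<in> G \<Longrightarrow> 0 \<le> p w \<and> (p w)\<^sup>2 \<le> q w * E\<^sup>2"
    and qn: "\<And>w. w \<in> G \<Longrightarrow> 0 \<le> q w" and qs: "(\<Sum>w\<in>G. q w) \<le> 1"
    and E: "0 < E" and cM: "real (card G) \<le> M" and M: "0 < M"
  shows "(\<Sum>w\<in>G. p w) \<le> E * sqrt M"
proof -
  define \<tau> where "\<tau> = sqrt M / E"
  have tpos: "0 < \<tau>" using E M by (simp add: \<tau>_def)
  have each: "p w \<le> (\<tau> * E\<^sup>2 * q w + 1 / \<tau>) / 2" if w: "w \<in> G" for w
  proof -
    have "0 \<le> (\<tau> * p w - 1)\<^sup>2" by simp
    then have "2 * \<tau> * p w \<le> \<tau>\<^sup>2 * (p w)\<^sup>2 + 1" by (simp add: power2_eq_square algebra_simps)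
    also have "\<dots> \<le> \<tau>\<^sup>2 * (q w * E\<^sup>2) + 1"
      using pq[OF w] by (intro add_right_mono mult_left_mono) auto
    finally have "2 * \<tau> * p w \<le> \<tau>\<^sup>2 * (q w * E\<^sup>2) + 1" .
    then show ?thesis using tpos by (simp add: field_simps power2_eq_square)
  qed
  have "(\<Sum>w\<in>G. p w) \<le> (\<Sum>w\<in>G. (\<tau> * E\<^sup>2 * q w + 1 / \<tau>) / 2)"
    by (rule sum_mono) (rule each)
  also have "\<dots> = (\<tau> * E\<^sup>2 * (\<Sum>w\<in>G. q w) + real (card G) / \<tau>) / 2"
    by (simp add: sum_divide_distrib[symmetric] sum.distrib sum_distrib_left)
  also have "\<dots> \<le> (\<tau> * E\<^sup>2 * 1 + M / \<tau>) / 2"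
    using qs cM tpos E by (intro divide_right_mono add_mono mult_left_mono divide_right_mono) auto
  also have "\<dots> = E * sqrt M"
    using E M by (simp add: \<tau>_def field_simps power2_eq_square)
  finally show ?thesis .
qed

lemma bad_card:
  fixes e :: "nat \<Rightarrow> real"
  assumes W: "finite W" and en: "\<And>w. w \<in> W \<Longrightarrow> 0 \<le> e w"
    and es: "(\<Sum>w\<in>W. e w) \<le> real (card W) * n * P" and P: "0 \<le> P" and A: "0 < A" and n: "0 < n"
  shows "real (card {w\<in>W. e w > n * A * P}) \<le> real (card W) / A"
proof (cases "P = 0")
  case True
  then have "(\<Sum>w\<in>W. e w) \<le> 0" using es by simp
  then have "\<forall>w\<in>W. e w = 0" using sum_nonneg_eq_0_iff[OF W] en
    by (metis (no_types, lifting) antisym sum_nonneg)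
  then have "{w\<in>W. e w > n * A * P} = {}" using True by auto
  then have "card {w\<in>W. e w > n * A * P} = 0" by (simp only: card.empty)
  then show ?thesis using A by simp
next
  case False
  then have Pp: "0 < P" using P by simp
  let ?B = "{w\<in>W. e w > n * A * P}"
  have "real (card ?B) * (n * A * P) = (\<Sum>w\<in>?B. n * A * P)" by simp
  also have "\<dots> \<le> (\<Sum>w\<in>?B. e w)" by (rule sum_mono) auto
  also have "\<dots> \<le> (\<Sum>w\<in>W. e w)" using W en by (intro sum_mono2) auto
  also have "\<dots> \<le> real (card W) * n * P" by (rule es)
  finally have "real (card ?B) * (n * A * P) \<le> real (card W) * n * P" .
  then have "real (card ?B) * A * (n * P) \<le> real (card W) * (n * P)" by (simp add: algebra_simps)
  then have "real (card ?B) * A \<le> real (card W)" using n Pp by (simp add: mult_le_cancel_right)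
  then show ?thesis using A by (simp add: field_simps)
qed

lemma rate_bound:
  fixes R :: real and n :: nat
  assumes R: "0 < R" and n: "1 \<le> n"
  shows "exp (real n * (R * ln 2 / 4)) \<le> 2 powr (- R / 4) * sqrt (real (nat \<lceil>2 powr (real n * R)\<rceil>))"
proof -
  have M: "2 powr (real n * R) \<le> real (nat \<lceil>2 powr (real n * R)\<rceil>)" by linarith
  have "sqrt (2 powr (real n * R)) = 2 powr (real n * R / 2)"
    by (simp add: powr_half_sqrt[symmetric] powr_powr)
  then have s: "2 powr (real n * R / 2) \<le> sqrt (real (nat \<lceil>2 powr (real n * R)\<rceil>))"
    using M by (metis real_sqrt_le_mono)
  have "exp (real n * (R * ln 2 / 4)) = 2 powr (real n * R / 4)"
    by (simp add: powr_def algebra_simps)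
  also have "\<dots> \<le> 2 powr (- R / 4 + real n * R / 2)"
    using n R by (intro powr_mono) (auto simp: field_simps)
  also have "\<dots> = 2 powr (- R / 4) * 2 powr (real n * R / 2)" by (rule powr_add)
  also have "\<dots> \<le> 2 powr (- R / 4) * sqrt (real (nat \<lceil>2 powr (real n * R)\<rceil>))"
    using s by (intro mult_left_mono) auto
  finally show ?thesis .
qed



definition thetaR :: "real \<Rightarrow> real" where "thetaR R = 2 powr (- R / 4)"
definition AA :: "real \<Rightarrow> real" where "AA R = 2 / (1 - thetaR R)"
definition betaR :: "real \<Rightarrow> real" where "betaR R = R * ln 2 / 4"
definition deltaR :: "real \<Rightarrow> real \<Rightarrow> real \<Rightarrow> real" where
  "deltaR P s R = betaR R * s / (AA R * (P + 1))"
definition tR :: "real \<Rightarrow> real \<Rightarrow> real \<Rightarrow> real" where "tR P s R = sqrt (deltaR P s R / 2)"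
definition boxB :: "real \<Rightarrow> complex set" where "boxB t = {z. \<bar>Re z\<bar> \<le> t \<and> \<bar>Im z\<bar> \<le> t}"

lemma thetaR_bounds: "0 < R \<Longrightarrow> 0 < thetaR R \<and> thetaR R < 1"
  unfolding thetaR_def by (auto intro!: powr_less_one)

lemma AA_pos: "0 < R \<Longrightarrow> 0 < AA R"
  using thetaR_bounds[of R] unfolding AA_def by auto

lemma deltaR_pos: "0 < R \<Longrightarrow> 0 < s \<Longrightarrow> 0 \<le> P \<Longrightarrow> 0 < deltaR P s R"
  using AA_pos[of R] unfolding deltaR_def betaR_def by (auto intro!: divide_pos_pos mult_pos_pos)

lemma boxB_cmod:
  assumes "0 < R" "0 < s" "0 \<le> P" "c \<in> boxB (tR P s R)"
  shows "(cmod c)\<^sup>2 \<le> deltaR P s R"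
proof -
  let ?t = "tR P s R"
  have d: "0 < deltaR P s R" using deltaR_pos assms by blast
  have t2: "?t\<^sup>2 = deltaR P s R / 2" unfolding tR_def using d by simp
  have "(Re c)\<^sup>2 \<le> ?t\<^sup>2" "(Im c)\<^sup>2 \<le> ?t\<^sup>2"
    using assms(4) unfolding boxB_def by (auto simp: abs_le_square_iff[symmetric] tR_def)
  then show ?thesis using t2 by (simp add: cmod_power2)
qed

lemma per_gain:
  fixes s P R :: real and n M :: nat and x :: "nat \<Rightarrow> nat \<Rightarrow> complex" and c :: complex
    and Dw :: "nat \<Rightarrow> (nat \<Rightarrow> complex) set"
  assumes s: "0 < s" and P: "0 \<le> P" and R: "0 < R" and n: "1 \<le> n" and MM: "M = num_msgs n R"
    and pow: "(\<Sum>w\<in>{1..M}. (1 / real n) * (\<Sum>i<n. (cmod (x w i))\<^sup>2)) / real M \<le> P"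
    and c: "c \<in> boxB (tR P s R)"
    and Dm: "\<And>w. w \<in> {1..M} \<Longrightarrow> Dw w \<in> sets (PiM {..<n} (\<lambda>_. cgauss s))"
    and Dd: "disjoint_family_on Dw {1..M}"
  shows "(\<Sum>w\<in>{1..M}. measure (PiM {..<n} (\<lambda>_. cgauss s))
            {y \<in> space (PiM {..<n} (\<lambda>_. cgauss s)). (\<lambda>i\<in>{..<n}. c * x w i + y i) \<in> Dw w})
         \<le> real M * (1 + thetaR R) / 2"
proof -
  let ?N = "PiM {..<n} (\<lambda>_. cgauss s)"
  let ?W = "{1..M}"
  define e where "e w = (\<Sum>i<n. (cmod (x w i))\<^sup>2)" for w
  define p where "p w = measure ?N {y \<in> space ?N. (\<lambda>i\<in>{..<n}. c * x w i + y i) \<in> Dw w}" for w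
  define q where "q w = measure ?N (Dw w)" for w
  define E where "E = exp (real n * betaR R)"
  define \<theta> where "\<theta> = thetaR R"
  define A where "A = AA R"
  have th: "0 < \<theta>" "\<theta> < 1" using thetaR_bounds[OF R] by (auto simp: \<theta>_def)
  have Apos: "0 < A" using AA_pos[OF R] by (simp add: A_def)
  have NPr: "prob_space ?N" by (rule prob_space_PiM) (simp add: prob_space_cgauss[OF s])
  have Mge: "1 \<le> M"
  proof -
    have "0 < 2 powr (real n * R)" by simp
    then have "0 < \<lceil>2 powr (real n * R)\<rceil>" by linarith
    then show ?thesis unfolding MM num_msgs_def by linarith
  qed
  have cardW: "card ?W = M" by simp
  have en: "0 \<le> e w" for w unfolding e_def by (simp add: sum_nonneg)
  have esum: "(\<Sum>w\<in>?W. e w) \<le> real (card ?W) * real n * P"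
  proof -
    have "(\<Sum>w\<in>?W. (1 / real n) * e w) \<le> real M * P"
      using pow Mge unfolding e_def by (simp add: divide_le_eq mult.commute)
    then have "(1 / real n) * (\<Sum>w\<in>?W. e w) \<le> real M * P" by (simp add: sum_distrib_left)
    then show ?thesis using n by (simp add: field_simps cardW)
  qed
  define bad where "bad = {w\<in>?W. e w > real n * A * P}"
  have bad_sub: "bad \<subseteq> ?W" unfolding bad_def by auto
  have cbad: "real (card bad) \<le> real M / A"
    using bad_card[of ?W e "real n" P A] en esum P Apos n unfolding bad_def by (simp add: cardW)
  have pn: "0 \<le> p w" "p w \<le> 1" for w
    unfolding p_def using prob_space.prob_le_1[OF NPr] by auto
  have qn: "0 \<le> q w" for w unfolding q_def by simp
  have qs: "(\<Sum>w\<in>?W. q w) \<le> 1"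
  proof -
    have "(\<Sum>w\<in>?W. q w) = measure ?N (\<Union>w\<in>?W. Dw w)"
      unfolding q_def
      by (rule finite_measure.finite_measure_finite_Union[OF prob_space.finite_measure[OF NPr], symmetric])
         (use Dm Dd in auto)
    also have "\<dots> \<le> 1" by (rule prob_space.prob_le_1[OF NPr])
    finally show ?thesis .
  qed
  have Epos: "0 < E" unfolding E_def by simp
  have good: "(p w)\<^sup>2 \<le> q w * E\<^sup>2" if w: "w \<in> ?W - bad" for w
  proof -
    have ew: "e w \<le> real n * A * P" using w unfolding bad_def by auto
    have c2: "(cmod c)\<^sup>2 \<le> deltaR P s R" by (rule boxB_cmod[OF R s P c])
    have sumeq: "(\<Sum>i\<in>{..<n}. (cmod (c * x w i))\<^sup>2) = (cmod c)\<^sup>2 * e w"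
      unfolding e_def by (simp add: norm_mult power_mult_distrib sum_distrib_left)
    have "(cmod c)\<^sup>2 * e w \<le> deltaR P s R * (real n * A * P)"
      using c2 ew en deltaR_pos[OF R s P] by (intro mult_mono) auto
    also have "\<dots> = real n * (betaR R * s) * (P / (P + 1))"
    proof -
      have "AA R + P * AA R > 0" using AA_pos[OF R] P by (simp add: add_pos_nonneg)
      then show ?thesis unfolding deltaR_def A_def using AA_pos[OF R] P by (simp add: field_simps)
    qed
    also have "\<dots> \<le> real n * (betaR R * s) * 1"
      using P R s by (intro mult_left_mono) (auto simp: betaR_def)
    finally have le: "(\<Sum>i\<in>{..<n}. (cmod (c * x w i))\<^sup>2) \<le> real n * betaR R * s"
      unfolding sumeq by simp
    have "(p w)\<^sup>2 \<le> q w * exp (2 * (\<Sum>i\<in>{..<n}. (cmod (c * x w i))\<^sup>2) / s)"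
      unfolding p_def q_def
      by (rule shift_bound[OF s _ Dm]) (use w in auto)
    also have "\<dots> \<le> q w * exp (2 * (real n * betaR R))"
      using le s qn[of w] by (intro mult_left_mono) (auto simp: field_simps)
    also have "exp (2 * (real n * betaR R)) = E\<^sup>2"
      unfolding E_def by (simp add: power2_eq_square exp_add[symmetric])
    finally show ?thesis .
  qed
  have cgood: "card (?W - bad) \<le> M" using card_mono[of ?W "?W - bad"] by auto
  have sgood: "(\<Sum>w\<in>?W - bad. p w) \<le> E * sqrt (real M)"
    by (rule sum_sqrt_bound[where q=q])
       (use good pn qn Epos Mge cgood in \<open>auto intro: order_trans[OF sum_mono2[of ?W] qs] simp: card_Diff_subset bad_sub\<close>)
  have rb: "E \<le> \<theta> * sqrt (real M)"
    using rate_bound[OF R n] unfolding E_def \<theta>_def thetaR_def betaR_def MM num_msgs_def by simp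
  have "E * sqrt (real M) \<le> \<theta> * sqrt (real M) * sqrt (real M)"
    using rb by (intro mult_right_mono) auto
  also have "\<dots> = \<theta> * real M" by simp
  finally have sgood': "(\<Sum>w\<in>?W - bad. p w) \<le> \<theta> * real M" using sgood by linarith
  have sbad: "(\<Sum>w\<in>bad. p w) \<le> real (card bad)"
    using sum_mono[of bad p "\<lambda>_. 1"] pn by auto
  have "(\<Sum>w\<in>?W. p w) = (\<Sum>w\<in>?W - bad. p w) + (\<Sum>w\<in>bad. p w)"
    by (rule sum.subset_diff[OF bad_sub]) simp
  also have "\<dots> \<le> \<theta> * real M + real M / A" using sgood' sbad cbad by linarith
  also have "\<dots> = real M * (1 + \<theta>) / 2"
    unfolding A_def AA_def \<theta>_def[symmetric] using th by (simp add: field_simps)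
  finally show ?thesis unfolding p_def \<theta>_def .
qed



lemma boxB_cbox: "boxB t = cbox (Complex (- t) (- t)) (Complex t t)"
  unfolding boxB_def by (auto simp: mem_box Basis_complex_def abs_le_iff)

lemma boxB_pos:
  assumes t: "0 < t"
  shows "0 < measure (cgauss 1) (boxB t)"
proof -
  interpret prob_space "cgauss 1" by (rule prob_space_cgauss) simp
  have Bm[measurable]: "boxB t \<in> sets borel" unfolding boxB_cbox by simp
  have lb: "ennreal (exp (- (2 * t\<^sup>2)) / pi) * indicator (boxB t) z \<le> ennreal (phi 1 z) * indicator (boxB t) z" for z
  proof (cases "z \<in> boxB t")
    case True
    then have "(Re z)\<^sup>2 \<le> t\<^sup>2" "(Im z)\<^sup>2 \<le> t\<^sup>2"
      unfolding boxB_def using t by (auto simp: abs_le_square_iff[symmetric])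
    then have "(cmod z)\<^sup>2 \<le> 2 * t\<^sup>2" by (simp add: cmod_power2)
    then have "exp (- (2 * t\<^sup>2)) / pi \<le> phi 1 z" unfolding phi_def by (simp add: divide_right_mono)
    then show ?thesis using True by (simp add: ennreal_leI)
  qed simp
  have eB: "emeasure lborel (boxB t) = ennreal (4 * t\<^sup>2)"
    unfolding boxB_cbox using t by (simp add: emeasure_lborel_cbox_eq Basis_complex_def power2_eq_square)
  have "ennreal (exp (- (2 * t\<^sup>2)) / pi * (4 * t\<^sup>2)) = ennreal (exp (- (2 * t\<^sup>2)) / pi) * ennreal (4 * t\<^sup>2)"
    by (rule ennreal_mult) auto
  also have "\<dots> = ennreal (exp (- (2 * t\<^sup>2)) / pi) * emeasure lborel (boxB t)" by (simp only: eB)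
  also have "\<dots> = (\<integral>\<^sup>+z. ennreal (exp (- (2 * t\<^sup>2)) / pi) * indicator (boxB t) z \<partial>lborel)"
    by (rule nn_integral_cmult_indicator[symmetric]) simp
  also have "\<dots> \<le> (\<integral>\<^sup>+z. ennreal (phi 1 z) * indicator (boxB t) z \<partial>lborel)"
    by (intro nn_integral_mono lb)
  also have "\<dots> = emeasure (cgauss 1) (boxB t)"
    unfolding cgauss_phi by (simp add: emeasure_density)
  also have "\<dots> = ennreal (measure (cgauss 1) (boxB t))" by (rule emeasure_eq_measure)
  finally have "exp (- (2 * t\<^sup>2)) / pi * (4 * t\<^sup>2) \<le> measure (cgauss 1) (boxB t)"
    by (subst (asm) ennreal_le_iff) auto
  moreover have "0 < exp (- (2 * t\<^sup>2)) / pi * (4 * t\<^sup>2)" using t by simp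
  ultimately show ?thesis by linarith
qed


lemma core:
  fixes N0 P R :: real and K k n M :: nat and x :: "nat \<Rightarrow> nat \<Rightarrow> complex"
    and dk :: "(nat \<Rightarrow> complex) \<times> (nat \<Rightarrow> complex) \<Rightarrow> nat"
  assumes s: "0 < N0" and P: "0 \<le> P" and R: "0 < R" and k: "1 \<le> k" "k \<le> K" and n: "1 \<le> n"
    and MM: "M = num_msgs n R"
    and pow: "(\<Sum>w\<in>{1..M}. (1 / real n) * (\<Sum>i<n. (cmod (x w i))\<^sup>2)) / real M \<le> P"
    and decm: "dk \<in> measurable (PiM {..<n} (\<lambda>_. borel) \<Otimes>\<^sub>M PiM ({0..K} - {k}) (\<lambda>_. borel)) (count_space UNIV)"
  shows "(\<Sum>w\<in>{1..M}. measure (chan_space N0 K n)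
            {\<omega> \<in> space (chan_space N0 K n). dk (observation x w k n \<omega>, incoming K k \<omega>) = w})
         \<le> real M * (1 - (1 - thetaR R) / 2 * measure (cgauss 1) (boxB (tR P N0 R)))"
proof -
  define G where "G = PiM (gain_idx K) (\<lambda>_. cgauss 1)"
  define Z where "Z = PiM (noise_idx K n) (\<lambda>_. cgauss N0)"
  define N where "N = PiM {..<n} (\<lambda>_. cgauss N0)"
  define \<Omega> where "\<Omega> = chan_space N0 K n"
  have \<Omega>: "\<Omega> = G \<Otimes>\<^sub>M Z" unfolding \<Omega>_def chan_space_def G_def Z_def ..
  define t where "t = tR P N0 R"
  define \<theta> where "\<theta> = thetaR R"
  define qB where "qB = measure (cgauss 1) (boxB t)"
  define S where "S w = {\<omega> \<in> space \<Omega>. dk (observation x w k n \<omega>, incoming K k \<omega>) = w}" for w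
  define v where "v \<gamma> = restrict (\<lambda>j. \<gamma> (j, k)) ({0..K} - {k})" for \<gamma> :: "nat \<times> nat \<Rightarrow> complex"
  define Dw where "Dw \<gamma> w = {y \<in> space N. dk (y, v \<gamma>) = w}" for \<gamma> w
  define E where "E \<gamma> w = {y \<in> space N. (\<lambda>i\<in>{..<n}. \<gamma> (0, k) * x w i + y i) \<in> Dw \<gamma> w}" for \<gamma> w
  define proj where "proj z = (\<lambda>i\<in>{..<n}. z (k, i))" for z :: "nat \<times> nat \<Rightarrow> complex"
  have PG: "prob_space G" unfolding G_def by (rule prob_space_PiM) (simp add: prob_space_cgauss)
  have PZ: "prob_space Z" unfolding Z_def by (rule prob_space_PiM) (simp add: prob_space_cgauss s)
  have PN: "prob_space N" unfolding N_def by (rule prob_space_PiM) (simp add: prob_space_cgauss s)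
  interpret G: prob_space G by (rule PG)
  interpret Z: prob_space Z by (rule PZ)
  interpret GZ: pair_prob_space G Z ..
  have gk: "(0, k) \<in> gain_idx K" using k by (auto simp: gain_idx_def)
  have gjk: "(j, k) \<in> gain_idx K" if "j \<in> {0..K} - {k}" for j using that k by (auto simp: gain_idx_def)
  have nk: "(k, i) \<in> noise_idx K n" if "i \<in> {..<n}" for i using that k by (auto simp: noise_idx_def)
  have mG: "(\<lambda>\<gamma>. \<gamma> j) \<in> borel_measurable G" if "j \<in> gain_idx K" for j
  proof -
    have "(\<lambda>\<gamma>. \<gamma> j) \<in> measurable G (cgauss 1)"
      unfolding G_def by (rule measurable_component_singleton[OF that])
    then show ?thesis by (simp add: measurable_cong_sets[OF refl sets_cgauss])
  qed
  have mZ: "(\<lambda>z. z j) \<in> borel_measurable Z" if "j \<in> noise_idx K n" for j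
  proof -
    have "(\<lambda>z. z j) \<in> measurable Z (cgauss N0)"
      unfolding Z_def by (rule measurable_component_singleton[OF that])
    then show ?thesis by (simp add: measurable_cong_sets[OF refl sets_cgauss])
  qed
  have obs_m: "(\<lambda>\<omega>. observation x w k n \<omega>) \<in> measurable \<Omega> (PiM {..<n} (\<lambda>_. borel))" for w
    unfolding observation_def \<Omega>
  proof (rule measurable_restrict)
    fix i assume i: "i \<in> {..<n}"
    have a: "(\<lambda>\<omega>. fst \<omega> (0, k)) \<in> borel_measurable (G \<Otimes>\<^sub>M Z)"
      by (rule measurable_compose[OF measurable_fst mG[OF gk]])
    have b: "(\<lambda>\<omega>. snd \<omega> (k, i)) \<in> borel_measurable (G \<Otimes>\<^sub>M Z)"
      by (rule measurable_compose[OF measurable_snd mZ[OF nk[OF i]]])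
    show "(\<lambda>\<omega>. fst \<omega> (0, k) * x w i + snd \<omega> (k, i)) \<in> borel_measurable (G \<Otimes>\<^sub>M Z)"
      using a b by measurable
  qed
  have inc_m: "(\<lambda>\<omega>. incoming K k \<omega>) \<in> measurable \<Omega> (PiM ({0..K} - {k}) (\<lambda>_. borel))"
    unfolding incoming_def \<Omega>
  proof (rule measurable_restrict)
    fix j assume j: "j \<in> {0..K} - {k}"
    show "(\<lambda>\<omega>. fst \<omega> (j, k)) \<in> borel_measurable (G \<Otimes>\<^sub>M Z)"
      by (rule measurable_compose[OF measurable_fst mG[OF gjk[OF j]]])
  qed
  have S_m: "S w \<in> sets \<Omega>" for w
  proof -
    have "(\<lambda>\<omega>. dk (observation x w k n \<omega>, incoming K k \<omega>)) \<in> measurable \<Omega> (count_space UNIV)"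
      by (rule measurable_compose[OF measurable_Pair[OF obs_m inc_m] decm])
    then have "(\<lambda>\<omega>. dk (observation x w k n \<omega>, incoming K k \<omega>)) -` {w} \<inter> space \<Omega> \<in> sets \<Omega>"
      by (rule measurable_sets) simp
    moreover have "(\<lambda>\<omega>. dk (observation x w k n \<omega>, incoming K k \<omega>)) -` {w} \<inter> space \<Omega> = S w"
      unfolding S_def by auto
    ultimately show ?thesis by simp
  qed
  have sN: "sets N = sets (PiM {..<n} (\<lambda>_. borel))"
    unfolding N_def by (intro sets_PiM_cong) auto
  have Dw_m: "Dw \<gamma> w \<in> sets N" if \<gamma>: "\<gamma> \<in> space G" for \<gamma> w
  proof -
    have vs: "v \<gamma> \<in> space (PiM ({0..K} - {k}) (\<lambda>_. borel))"
      unfolding v_def by (simp add: space_PiM)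
    have "(\<lambda>y. (y, v \<gamma>)) \<in> measurable N (PiM {..<n} (\<lambda>_. borel) \<Otimes>\<^sub>M PiM ({0..K} - {k}) (\<lambda>_. borel))"
      by (intro measurable_Pair measurable_const vs measurable_ident_sets sN)
    then have "(\<lambda>y. dk (y, v \<gamma>)) \<in> measurable N (count_space UNIV)"
      by (rule measurable_compose[OF _ decm])
    then have "(\<lambda>y. dk (y, v \<gamma>)) -` {w} \<inter> space N \<in> sets N"
      by (rule measurable_sets) simp
    moreover have "(\<lambda>y. dk (y, v \<gamma>)) -` {w} \<inter> space N = Dw \<gamma> w"
      unfolding Dw_def by auto
    ultimately show ?thesis by simp
  qed
  have T_m: "(\<lambda>y. \<lambda>i\<in>{..<n}. c * x w i + y i) \<in> measurable N N" for c w
    unfolding N_def by measurable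
  have E_m: "E \<gamma> w \<in> sets N" if "\<gamma> \<in> space G" for \<gamma> w
  proof -
    have "(\<lambda>y. \<lambda>i\<in>{..<n}. \<gamma> (0, k) * x w i + y i) -` Dw \<gamma> w \<inter> space N \<in> sets N"
      by (rule measurable_sets[OF T_m Dw_m[OF that]])
    moreover have "(\<lambda>y. \<lambda>i\<in>{..<n}. \<gamma> (0, k) * x w i + y i) -` Dw \<gamma> w \<inter> space N = E \<gamma> w"
      unfolding E_def by auto
    ultimately show ?thesis by simp
  qed
  have proj_m: "proj \<in> measurable Z N"
    unfolding proj_def N_def Z_def
    using measurable_component_singleton nk by (intro measurable_restrict) auto
  have distr_proj: "distr Z N proj = N"
    unfolding Z_def N_def proj_def
    using distr_PiM_reindex[of "noise_idx K n" "\<lambda>_. cgauss N0" "\<lambda>i. (k, i)" "{..<n}"] nk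
    by (auto simp: prob_space_cgauss s inj_on_def)
  have sect: "emeasure Z (Pair \<gamma> -` S w) = ennreal (measure N (E \<gamma> w))" if \<gamma>: "\<gamma> \<in> space G" for \<gamma> w
  proof -
    have eq: "Pair \<gamma> -` S w = proj -` E \<gamma> w \<inter> space Z"
    proof (intro set_eqI iffI)
      fix z assume "z \<in> Pair \<gamma> -` S w"
      then have z: "z \<in> space Z" and d: "dk (observation x w k n (\<gamma>, z), incoming K k (\<gamma>, z)) = w"
        unfolding S_def \<Omega> by (auto simp: space_pair_measure)
      have o: "observation x w k n (\<gamma>, z) = (\<lambda>i\<in>{..<n}. \<gamma> (0, k) * x w i + proj z i)"
        unfolding observation_def proj_def by auto
      have ic: "incoming K k (\<gamma>, z) = v \<gamma>" unfolding incoming_def v_def by simp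
      show "z \<in> proj -` E \<gamma> w \<inter> space Z"
        using z d proj_m unfolding E_def Dw_def o ic
        by (auto simp: space_PiM N_def proj_def PiE_iff)
    next
      fix z assume z: "z \<in> proj -` E \<gamma> w \<inter> space Z"
      have o: "observation x w k n (\<gamma>, z) = (\<lambda>i\<in>{..<n}. \<gamma> (0, k) * x w i + proj z i)"
        unfolding observation_def proj_def by auto
      have ic: "incoming K k (\<gamma>, z) = v \<gamma>" unfolding incoming_def v_def by simp
      show "z \<in> Pair \<gamma> -` S w"
        using z \<gamma> o ic unfolding E_def Dw_def S_def \<Omega> by (auto simp: space_pair_measure)
    qed
    have "emeasure Z (Pair \<gamma> -` S w) = emeasure (distr Z N proj) (E \<gamma> w)"
      unfolding eq by (rule emeasure_distr[OF proj_m E_m[OF \<gamma>], symmetric])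
    also have "\<dots> = emeasure N (E \<gamma> w)" by (simp add: distr_proj)
    also have "\<dots> = ennreal (measure N (E \<gamma> w))" by (rule finite_measure.emeasure_eq_measure[OF prob_space.finite_measure[OF PN]])
    finally show ?thesis .
  qed
  have Pw: "(\<Sum>w\<in>{1..M}. measure N (E \<gamma> w)) \<le> (if \<gamma> (0, k) \<in> boxB t then real M * (1 + \<theta>) / 2 else real M)"
    if \<gamma>: "\<gamma> \<in> space G" for \<gamma>
  proof (cases "\<gamma> (0, k) \<in> boxB t")
    case True
    have "(\<Sum>w\<in>{1..M}. measure N (E \<gamma> w)) \<le> real M * (1 + thetaR R) / 2"
      unfolding E_def N_def
      by (rule per_gain[OF s P R n MM pow]) (use True Dw_m[OF \<gamma>] in \<open>auto simp: t_def N_def disjoint_family_on_def Dw_def\<close>)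
    then show ?thesis using True by (simp add: \<theta>_def)
  next
    case False
    have "(\<Sum>w\<in>{1..M}. measure N (E \<gamma> w)) \<le> (\<Sum>w\<in>{1..M}. 1)"
      by (rule sum_mono) (rule prob_space.prob_le_1[OF PN])
    then show ?thesis using False by simp
  qed
  have sumS: "(\<Sum>w\<in>{1..M}. emeasure \<Omega> (S w)) = (\<integral>\<^sup>+\<gamma>. (\<Sum>w\<in>{1..M}. emeasure Z (Pair \<gamma> -` S w)) \<partial>G)"
  proof -
    have "(\<Sum>w\<in>{1..M}. emeasure \<Omega> (S w)) = (\<Sum>w\<in>{1..M}. \<integral>\<^sup>+\<gamma>. emeasure Z (Pair \<gamma> -` S w) \<partial>G)"
      using S_m unfolding \<Omega> by (intro sum.cong refl Z.emeasure_pair_measure_alt) auto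
    also have "\<dots> = (\<integral>\<^sup>+\<gamma>. (\<Sum>w\<in>{1..M}. emeasure Z (Pair \<gamma> -` S w)) \<partial>G)"
      using S_m unfolding \<Omega> by (intro nn_integral_sum[symmetric] GZ.measurable_emeasure_Pair1) auto
    finally show ?thesis .
  qed
  define BG where "BG = {\<gamma> \<in> space G. \<gamma> (0, k) \<in> boxB t}"
  have Bb[measurable]: "boxB t \<in> sets borel" unfolding boxB_cbox by simp
  have BGeq: "BG = (\<lambda>\<gamma>. \<gamma> (0, k)) -` boxB t \<inter> space G" unfolding BG_def by auto
  have mGc: "(\<lambda>\<gamma>. \<gamma> (0, k)) \<in> measurable G (cgauss 1)"
    unfolding G_def by (rule measurable_component_singleton[OF gk])
  have BG_m: "BG \<in> sets G"
    unfolding BGeq by (rule measurable_sets[OF mGc]) simp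
  have eBG: "emeasure G BG = ennreal qB"
  proof -
    have "emeasure G BG = emeasure (distr G (cgauss 1) (\<lambda>\<gamma>. \<gamma> (0, k))) (boxB t)"
      unfolding BGeq by (rule emeasure_distr[OF mGc, symmetric]) simp
    also have "\<dots> = emeasure (cgauss 1) (boxB t)"
      unfolding G_def using distr_PiM_component[of "gain_idx K" "\<lambda>_. cgauss 1" "(0, k)"] gk
      by (simp add: prob_space_cgauss)
    also have "\<dots> = ennreal qB" unfolding qB_def
      by (rule finite_measure.emeasure_eq_measure[OF prob_space.finite_measure[OF prob_space_cgauss]]) simp
    finally show ?thesis .
  qed
  have mBG: "measure G BG = qB" using eBG G.emeasure_eq_measure by (simp add: qB_def)
  have eBGc: "emeasure G (space G - BG) = ennreal (1 - qB)"
    using G.prob_compl[OF BG_m] mBG G.emeasure_eq_measure by simp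
  have "(\<integral>\<^sup>+\<gamma>. (\<Sum>w\<in>{1..M}. emeasure Z (Pair \<gamma> -` S w)) \<partial>G)
      \<le> (\<integral>\<^sup>+\<gamma>. ennreal (real M * (1 + \<theta>) / 2) * indicator BG \<gamma> + ennreal (real M) * indicator (space G - BG) \<gamma> \<partial>G)"
  proof (rule nn_integral_mono)
    fix \<gamma> assume \<gamma>: "\<gamma> \<in> space G"
    have "(\<Sum>w\<in>{1..M}. emeasure Z (Pair \<gamma> -` S w)) = (\<Sum>w\<in>{1..M}. ennreal (measure N (E \<gamma> w)))"
      using sect[OF \<gamma>] by simp
    also have "\<dots> = ennreal (\<Sum>w\<in>{1..M}. measure N (E \<gamma> w))" by (rule sum_ennreal) simp
    also have "\<dots> \<le> ennreal (if \<gamma> (0, k) \<in> boxB t then real M * (1 + \<theta>) / 2 else real M)"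
      by (rule ennreal_leI[OF Pw[OF \<gamma>]])
    also have "\<dots> = ennreal (real M * (1 + \<theta>) / 2) * indicator BG \<gamma> + ennreal (real M) * indicator (space G - BG) \<gamma>"
      using \<gamma> by (auto simp: BG_def indicator_def)
    finally show "(\<Sum>w\<in>{1..M}. emeasure Z (Pair \<gamma> -` S w)) \<le> ennreal (real M * (1 + \<theta>) / 2) * indicator BG \<gamma> + ennreal (real M) * indicator (space G - BG) \<gamma>" .
  qed
  also have "\<dots> = ennreal (real M * (1 + \<theta>) / 2) * emeasure G BG + ennreal (real M) * emeasure G (space G - BG)"
    using BG_m by (subst nn_integral_add) (auto simp: nn_integral_cmult_indicator)
  also have "\<dots> = ennreal (real M * (1 + \<theta>) / 2 * qB + real M * (1 - qB))"
  proof -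
    have th: "0 < \<theta>" unfolding \<theta>_def using thetaR_bounds[OF R] by simp
    have q1: "qB \<le> 1" "0 \<le> qB" unfolding qB_def using prob_space.prob_le_1[OF prob_space_cgauss[of 1]] by auto
    show ?thesis unfolding eBG eBGc using th q1
      by (simp add: ennreal_mult[symmetric] ennreal_plus[symmetric] del: ennreal_plus)
  qed
  finally have main: "(\<Sum>w\<in>{1..M}. emeasure \<Omega> (S w)) \<le> ennreal (real M * (1 + \<theta>) / 2 * qB + real M * (1 - qB))"
    unfolding sumS .
  have P\<Omega>: "prob_space \<Omega>" unfolding \<Omega> by (rule GZ.prob_space_axioms)
  have "(\<Sum>w\<in>{1..M}. emeasure \<Omega> (S w)) = ennreal (\<Sum>w\<in>{1..M}. measure \<Omega> (S w))"
    by (simp add: finite_measure.emeasure_eq_measure[OF prob_space.finite_measure[OF P\<Omega>]] sum_ennreal)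
  with main have m2: "ennreal (\<Sum>w\<in>{1..M}. measure \<Omega> (S w)) \<le> ennreal (real M * (1 + \<theta>) / 2 * qB + real M * (1 - qB))"
    by simp
  have th': "0 < \<theta>" unfolding \<theta>_def using thetaR_bounds[OF R] by simp
  have q1': "qB \<le> 1" "0 \<le> qB" unfolding qB_def using prob_space.prob_le_1[OF prob_space_cgauss[of 1]] by auto
  have nn: "0 \<le> real M * (1 + \<theta>) / 2 * qB + real M * (1 - qB)"
    using th' q1' by (intro add_nonneg_nonneg mult_nonneg_nonneg) auto
  have "(\<Sum>w\<in>{1..M}. measure \<Omega> (S w)) \<le> real M * (1 + \<theta>) / 2 * qB + real M * (1 - qB)"
    using m2 ennreal_le_iff[OF nn] by simp
  also have "\<dots> = real M * (1 - (1 - \<theta>) / 2 * qB)" by (simp add: field_simps)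
  finally show ?thesis unfolding S_def \<Omega>_def \<theta>_def qB_def t_def .
qed



lemma S_meas:
  fixes N0 :: real and K k n w :: nat and x :: "nat \<Rightarrow> nat \<Rightarrow> complex"
    and dk :: "(nat \<Rightarrow> complex) \<times> (nat \<Rightarrow> complex) \<Rightarrow> nat"
  assumes k: "1 \<le> k" "k \<le> K"
    and decm: "dk \<in> measurable (PiM {..<n} (\<lambda>_. borel) \<Otimes>\<^sub>M PiM ({0..K} - {k}) (\<lambda>_. borel)) (count_space UNIV)"
  shows "{\<omega> \<in> space (chan_space N0 K n). dk (observation x w k n \<omega>, incoming K k \<omega>) = w} \<in> sets (chan_space N0 K n)"
proof -
  define G where "G = PiM (gain_idx K) (\<lambda>_. cgauss 1)"
  define Z where "Z = PiM (noise_idx K n) (\<lambda>_. cgauss N0)"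
  define \<Omega> where "\<Omega> = chan_space N0 K n"
  have \<Omega>: "\<Omega> = G \<Otimes>\<^sub>M Z" unfolding \<Omega>_def chan_space_def G_def Z_def ..
  have gk: "(0, k) \<in> gain_idx K" using k by (auto simp: gain_idx_def)
  have gjk: "(j, k) \<in> gain_idx K" if "j \<in> {0..K} - {k}" for j using that k by (auto simp: gain_idx_def)
  have nk: "(k, i) \<in> noise_idx K n" if "i \<in> {..<n}" for i using that k by (auto simp: noise_idx_def)
  have mG: "(\<lambda>\<gamma>. \<gamma> j) \<in> borel_measurable G" if "j \<in> gain_idx K" for j
  proof -
    have "(\<lambda>\<gamma>. \<gamma> j) \<in> measurable G (cgauss 1)"
      unfolding G_def by (rule measurable_component_singleton[OF that])
    then show ?thesis by (simp add: measurable_cong_sets[OF refl sets_cgauss])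
  qed
  have mZ: "(\<lambda>z. z j) \<in> borel_measurable Z" if "j \<in> noise_idx K n" for j
  proof -
    have "(\<lambda>z. z j) \<in> measurable Z (cgauss N0)"
      unfolding Z_def by (rule measurable_component_singleton[OF that])
    then show ?thesis by (simp add: measurable_cong_sets[OF refl sets_cgauss])
  qed
  have obs_m: "(\<lambda>\<omega>. observation x w k n \<omega>) \<in> measurable \<Omega> (PiM {..<n} (\<lambda>_. borel))"
    unfolding observation_def \<Omega>
  proof (rule measurable_restrict)
    fix i assume i: "i \<in> {..<n}"
    have a: "(\<lambda>\<omega>. fst \<omega> (0, k)) \<in> borel_measurable (G \<Otimes>\<^sub>M Z)"
      by (rule measurable_compose[OF measurable_fst mG[OF gk]])
    have b: "(\<lambda>\<omega>. snd \<omega> (k, i)) \<in> borel_measurable (G \<Otimes>\<^sub>M Z)"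
      by (rule measurable_compose[OF measurable_snd mZ[OF nk[OF i]]])
    show "(\<lambda>\<omega>. fst \<omega> (0, k) * x w i + snd \<omega> (k, i)) \<in> borel_measurable (G \<Otimes>\<^sub>M Z)"
      using a b by measurable
  qed
  have inc_m: "(\<lambda>\<omega>. incoming K k \<omega>) \<in> measurable \<Omega> (PiM ({0..K} - {k}) (\<lambda>_. borel))"
    unfolding incoming_def \<Omega>
  proof (rule measurable_restrict)
    fix j assume j: "j \<in> {0..K} - {k}"
    show "(\<lambda>\<omega>. fst \<omega> (j, k)) \<in> borel_measurable (G \<Otimes>\<^sub>M Z)"
      by (rule measurable_compose[OF measurable_fst mG[OF gjk[OF j]]])
  qed
  have "(\<lambda>\<omega>. dk (observation x w k n \<omega>, incoming K k \<omega>)) \<in> measurable \<Omega> (count_space UNIV)"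
    by (rule measurable_compose[OF measurable_Pair[OF obs_m inc_m] decm])
  then have "(\<lambda>\<omega>. dk (observation x w k n \<omega>, incoming K k \<omega>)) -` {w} \<inter> space \<Omega> \<in> sets \<Omega>"
    by (rule measurable_sets) simp
  moreover have "(\<lambda>\<omega>. dk (observation x w k n \<omega>, incoming K k \<omega>)) -` {w} \<inter> space \<Omega>
      = {\<omega> \<in> space \<Omega>. dk (observation x w k n \<omega>, incoming K k \<omega>) = w}"
    by auto
  ultimately show ?thesis unfolding \<Omega>_def by simp
qed

lemma prob_space_chan: "0 < N0 \<Longrightarrow> prob_space (chan_space N0 K n)"
  unfolding chan_space_def
  by (intro prob_space_pair prob_space_PiM) (auto simp: prob_space_cgauss)

lemma fail_lb:
  fixes N0 P R :: real and K k n M :: nat and x :: "nat \<Rightarrow> nat \<Rightarrow> complex"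
    and dec :: "nat \<Rightarrow> (nat \<Rightarrow> complex) \<times> (nat \<Rightarrow> complex) \<Rightarrow> nat" and D :: "nat set"
  assumes s: "0 < N0" and P: "0 \<le> P" and R: "0 < R" and kD: "k \<in> D" and DK: "D \<subseteq> {1..K}"
    and MM: "M = num_msgs n R" and adm: "cf_admissible P D K n M x dec"
  shows "(1 - thetaR R) / 2 * measure (cgauss 1) (boxB (tR P N0 R)) \<le> fail_prob N0 K n M x dec D"
proof -
  define \<Omega> where "\<Omega> = chan_space N0 K n"
  interpret O: prob_space \<Omega> unfolding \<Omega>_def by (rule prob_space_chan[OF s])
  define \<eta> where "\<eta> = (1 - thetaR R) / 2 * measure (cgauss 1) (boxB (tR P N0 R))"
  have n: "1 \<le> n" and pow: "(\<Sum>w\<in>{1..M}. (1 / real n) * (\<Sum>i<n. (cmod (x w i))\<^sup>2)) / real M \<le> P"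
    and decm: "\<And>k'. k' \<in> D \<Longrightarrow> dec k' \<in> measurable
        (PiM {..<n} (\<lambda>_. borel) \<Otimes>\<^sub>M PiM ({0..K} - {k'}) (\<lambda>_. borel)) (count_space UNIV)"
    using adm unfolding cf_admissible_def by auto
  have k: "1 \<le> k" "k \<le> K" using kD DK by auto
  have finD: "finite D" using DK finite_subset by blast
  define S where "S w = {\<omega> \<in> space \<Omega>. dec k (observation x w k n \<omega>, incoming K k \<omega>) = w}" for w
  define F where "F w = {\<omega> \<in> space \<Omega>. \<exists>k'\<in>D. dec k' (observation x w k' n \<omega>, incoming K k' \<omega>) \<noteq> w}" for w
  have Sm: "S w \<in> sets \<Omega>" for w unfolding S_def \<Omega>_def by (rule S_meas[OF k decm[OF kD]])
  have Fm: "F w \<in> sets \<Omega>" for w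
  proof -
    have "F w = space \<Omega> \<inter> (\<Union>k'\<in>D. space \<Omega> - {\<omega> \<in> space \<Omega>. dec k' (observation x w k' n \<omega>, incoming K k' \<omega>) = w})"
      unfolding F_def by auto
    also have "\<dots> \<in> sets \<Omega>"
    proof (intro sets.Int sets.top sets.finite_UN finD ballI sets.compl_sets)
      fix k' assume "k' \<in> D"
      then show "{\<omega> \<in> space \<Omega>. dec k' (observation x w k' n \<omega>, incoming K k' \<omega>) = w} \<in> sets \<Omega>"
        unfolding \<Omega>_def using DK by (intro S_meas decm) auto
    qed
    finally show ?thesis .
  qed
  have FS: "1 - measure \<Omega> (S w) \<le> measure \<Omega> (F w)" for w
  proof -
    have "space \<Omega> - S w \<subseteq> F w" unfolding S_def F_def using kD by auto
    then have "measure \<Omega> (space \<Omega> - S w) \<le> measure \<Omega> (F w)"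
      by (intro O.finite_measure_mono Fm)
    then show ?thesis using O.prob_compl[OF Sm] by simp
  qed
  have Mge: "1 \<le> M"
  proof -
    have "0 < 2 powr (real n * R)" by simp
    then have "0 < \<lceil>2 powr (real n * R)\<rceil>" by linarith
    then show ?thesis unfolding MM num_msgs_def by linarith
  qed
  have core': "(\<Sum>w\<in>{1..M}. measure \<Omega> (S w)) \<le> real M * (1 - \<eta>)"
    unfolding S_def \<Omega>_def \<eta>_def by (rule core[OF s P R k n MM pow decm[OF kD]])
  have "real M * \<eta> = real M - real M * (1 - \<eta>)" by (simp add: algebra_simps)
  also have "\<dots> \<le> (\<Sum>w\<in>{1..M}. 1) - (\<Sum>w\<in>{1..M}. measure \<Omega> (S w))" using core' by simp
  also have "\<dots> = (\<Sum>w\<in>{1..M}. 1 - measure \<Omega> (S w))" by (simp add: sum_subtractf)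
  also have "\<dots> \<le> (\<Sum>w\<in>{1..M}. measure \<Omega> (F w))" by (rule sum_mono) (rule FS)
  finally have "real M * \<eta> \<le> (\<Sum>w\<in>{1..M}. measure \<Omega> (F w))" .
  then have "\<eta> \<le> (\<Sum>w\<in>{1..M}. measure \<Omega> (F w)) / real M"
    using Mge by (simp add: field_simps)
  then show ?thesis unfolding fail_prob_def F_def \<Omega>_def \<eta>_def .
qed



lemma eta_pos:
  assumes s: "0 < N0" and P: "0 \<le> P" and R: "0 < R"
  shows "0 < (1 - thetaR R) / 2 * measure (cgauss 1) (boxB (tR P N0 R))"
proof -
  have "0 < tR P N0 R" unfolding tR_def using deltaR_pos[OF R s P] by simp
  then have "0 < measure (cgauss 1) (boxB (tR P N0 R))" by (rule boxB_pos)
  moreover have "thetaR R < 1" using thetaR_bounds[OF R] by simp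
  ultimately show ?thesis by simp
qed

lemma achievable_0:
  assumes P: "0 \<le> P" and s: "0 < N0"
  shows "cf_achievable P N0 D 0"
proof -
  have M1: "num_msgs 1 0 = 1" unfolding num_msgs_def by simp
  have adm: "cf_admissible P (D K) K 1 1 (\<lambda>w i. 0) (\<lambda>k _. 1)" for K
    unfolding cf_admissible_def using P by auto
  have fp: "fail_prob N0 K 1 1 (\<lambda>w i. 0) (\<lambda>k _. 1) (D K) = 0" for K
    unfolding fail_prob_def by simp
  have "(\<forall>K\<ge>1. cf_admissible P (D K) K 1 (num_msgs 1 0) (\<lambda>w i. 0) (\<lambda>k _. 1)) \<and>
      (\<lambda>K. fail_prob N0 K 1 (num_msgs 1 0) (\<lambda>w i. 0) (\<lambda>k _. 1) (D K)) \<longlonglongrightarrow> 0"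
    unfolding M1 using adm fp by simp
  then show ?thesis unfolding cf_achievable_def
    by (intro conjI order_refl exI[of _ "\<lambda>K. (1::nat)"] exI[of _ "\<lambda>K w i. (0::complex)"]
        exI[of _ "\<lambda>K k _. (1::nat)"]) auto
qed

lemma not_achievable:
  assumes s: "0 < N0" and P: "0 \<le> P" and R: "0 < R"
    and D: "\<And>K. 1 \<le> K \<Longrightarrow> \<exists>k. k \<in> D K \<and> D K \<subseteq> {1..K}"
  shows "\<not> cf_achievable P N0 D R"
proof
  assume "cf_achievable P N0 D R"
  then obtain n x dec where adm: "\<forall>K\<ge>1. cf_admissible P (D K) K (n K) (num_msgs (n K) R) (x K) (dec K)"
    and lim: "(\<lambda>K. fail_prob N0 K (n K) (num_msgs (n K) R) (x K) (dec K) (D K)) \<longlonglongrightarrow> 0"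
    unfolding cf_achievable_def by blast
  define \<eta> where "\<eta> = (1 - thetaR R) / 2 * measure (cgauss 1) (boxB (tR P N0 R))"
  have eta: "0 < \<eta>" unfolding \<eta>_def by (rule eta_pos[OF s P R])
  have ev1: "eventually (\<lambda>K. fail_prob N0 K (n K) (num_msgs (n K) R) (x K) (dec K) (D K) < \<eta>) sequentially"
    using order_tendstoD(2)[OF lim eta] .
  have ev2: "eventually (\<lambda>K. 1 \<le> K) sequentially" by (rule eventually_ge_at_top)
  have "eventually (\<lambda>K. 1 \<le> K \<and> fail_prob N0 K (n K) (num_msgs (n K) R) (x K) (dec K) (D K) < \<eta>) sequentially"
    by (rule eventually_conj[OF ev2 ev1])
  then obtain N where N: "\<And>K. N \<le> K \<Longrightarrow> 1 \<le> K \<and> fail_prob N0 K (n K) (num_msgs (n K) R) (x K) (dec K) (D K) < \<eta>"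
    unfolding eventually_sequentially by blast
  define K where "K = N"
  have K: "1 \<le> K" and lt: "fail_prob N0 K (n K) (num_msgs (n K) R) (x K) (dec K) (D K) < \<eta>"
    using N[of K] unfolding K_def by auto
  obtain k where kD: "k \<in> D K" and DK: "D K \<subseteq> {1..K}" using D[OF K] by blast
  have admK: "cf_admissible P (D K) K (n K) (num_msgs (n K) R) (x K) (dec K)"
    using adm K by blast
  have "\<eta> \<le> fail_prob N0 K (n K) (num_msgs (n K) R) (x K) (dec K) (D K)"
    unfolding \<eta>_def by (rule fail_lb[OF s P R kD DK refl admK])
  with lt show False by simp
qed

lemma capacity_zero:
  assumes s: "0 < N0" and P: "0 \<le> P"
    and D: "\<And>K. 1 \<le> K \<Longrightarrow> \<exists>k. k \<in> D K \<and> D K \<subseteq> {1..K}"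
  shows "cf_capacity P N0 D = 0"
proof -
  have le: "R \<le> 0" if "cf_achievable P N0 D R" for R
  proof (rule ccontr)
    assume "\<not> R \<le> 0"
    then have "0 < R" by simp
    from not_achievable[OF s P this D] that show False by blast
  qed
  show ?thesis unfolding cf_capacity_def
  proof (rule antisym)
    show "Sup (ereal ` {R. cf_achievable P N0 D R}) \<le> 0"
    proof (rule Sup_least)
      fix y assume "y \<in> ereal ` {R. cf_achievable P N0 D R}"
      then obtain R where y: "y = ereal R" and a: "cf_achievable P N0 D R" by blast
      show "y \<le> 0" using le[OF a] y by simp
    qed
    have "ereal 0 \<in> ereal ` {R. cf_achievable P N0 D R}"
      using achievable_0[OF P s, of D] by blast
    then have "ereal 0 \<le> Sup (ereal ` {R. cf_achievable P N0 D R})" by (rule Sup_upper)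
    then show "0 \<le> Sup (ereal ` {R. cf_achievable P N0 D R})" by (simp add: zero_ereal_def)
  qed
qed

theorem theorem2:
  fixes P N0 :: real and d :: "nat \<Rightarrow> nat"
  assumes "0 \<le> P" and "0 < N0"
    and "\<forall>K\<ge>1. 1 \<le> d K \<and> d K \<le> K"
  shows "cf_capacity P N0 (\<lambda>K. {d K}) = 0 \<and> cf_capacity P N0 (\<lambda>K. {1..K}) = 0"
proof
  show "cf_capacity P N0 (\<lambda>K. {d K}) = 0"
    by (rule capacity_zero[OF assms(2,1)]) (use assms(3) in auto)
  show "cf_capacity P N0 (\<lambda>K. {1..K}) = 0"
  proof (rule capacity_zero[OF assms(2,1)])
    fix K :: nat assume "1 \<le> K"
    then show "\<exists>k. k \<in> {1..K} \<and> {1..K} \<subseteq> {1..K}" by (intro exI[of _ 1]) auto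
  qed
qed


end
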